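(* Let $p$ be a prime and let $\mathcal P$ be the set consisting of $0$, $1$, and all positive integral powers of $p$. Let $G$ be a finite $p$-group of nilpotency class $2$ and $w\in F_k$. Then there exist $t_0,t_1,\dots,t_{k-1}\in\mathcal P$ such that $w$ is $F_k(G)$-automorphic to the word $$x_1^{t_0}[x_1,x_2]^{t_1}[x_2,x_3]^{t_2}\cdots[x_{k-1},x_k]^{t_{k-1}}.$$
   Context: $F_k$ is the free group on $x_1,\dots,x_k$. For a group $G$, each $w\in F_k$ induces a word map $G^k\to G$ by evaluation; the set $F_k(G)$ of all such word maps is a group under pointwise multiplication. Two words $w_1,w_2\in F_k$ are called $F_k(G)$-automorphic if there is a group automorphism of $F_k(G)$ sending the word map of $w_1$ to the word map of $w_2$. Commutators are $[a,b]:=aba^{-1}b^{-1}$. *)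

theory Defs
  imports "HOL-Algebra.Algebra"
begin

text \<open>Words of the free group F_k: lists of letters (i, b), where the letter
  (i, False) stands for the generator x_(i+1) and (i, True) for its inverse,
  with 0 <= i < k.  (Unreduced words; the word map only depends on the
  free-group element represented.)\<close>

type_synonym word = "(nat \<times> bool) list"

definition words :: "nat \<Rightarrow> word set" where
  "words k = {w. \<forall>(i, b) \<in> set w. i < k}"

definition eval_word :: "('a, 'b) monoid_scheme \<Rightarrow> (nat \<Rightarrow> 'a) \<Rightarrow> word \<Rightarrow> 'a" where
  "eval_word G g w =
     foldr (\<lambda>(i, b) acc. (if b then inv\<^bsub>G\<^esub> (g i) else g i) \<otimes>\<^bsub>G\<^esub> acc) w \<one>\<^bsub>G\<^esub>"

definition tuples :: "('a, 'b) monoid_scheme \<Rightarrow> nat \<Rightarrow> (nat \<Rightarrow> 'a) set" where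
  "tuples G k = PiE {..<k} (\<lambda>_. carrier G)"

definition word_map :: "('a, 'b) monoid_scheme \<Rightarrow> nat \<Rightarrow> word \<Rightarrow> ((nat \<Rightarrow> 'a) \<Rightarrow> 'a)" where
  "word_map G k w = (\<lambda>g \<in> tuples G k. eval_word G g w)"

definition word_map_group :: "('a, 'b) monoid_scheme \<Rightarrow> nat \<Rightarrow> ((nat \<Rightarrow> 'a) \<Rightarrow> 'a) monoid" where
  "word_map_group G k =
     \<lparr> carrier = word_map G k ` words k,
       Group.monoid.mult = (\<lambda>f h. \<lambda>g \<in> tuples G k. f g \<otimes>\<^bsub>G\<^esub> h g),
       one = (\<lambda>g \<in> tuples G k. \<one>\<^bsub>G\<^esub>) \<rparr>"

definition automorphic :: "('a, 'b) monoid_scheme \<Rightarrow> nat \<Rightarrow> word \<Rightarrow> word \<Rightarrow> bool" where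
  "automorphic G k w1 w2 \<longleftrightarrow>
     (\<exists>\<phi> \<in> iso (word_map_group G k) (word_map_group G k).
        \<phi> (word_map G k w1) = word_map G k w2)"

definition word_inv :: "word \<Rightarrow> word" where
  "word_inv w = rev (map (\<lambda>(i, b). (i, \<not> b)) w)"

definition word_pow :: "word \<Rightarrow> nat \<Rightarrow> word" where
  "word_pow w n = concat (replicate n w)"

definition word_comm :: "word \<Rightarrow> word \<Rightarrow> word" where
  "word_comm a b = a @ b @ word_inv a @ word_inv b"

definition gen :: "nat \<Rightarrow> word" where
  "gen i = [(i, False)]"

text \<open>x_1^(t_0) [x_1,x_2]^(t_1) ... [x_(k-1),x_k]^(t_(k-1)) (0-indexed letters).\<close>
definition normal_word :: "nat \<Rightarrow> (nat \<Rightarrow> nat) \<Rightarrow> word" where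
  "normal_word k t =
     word_pow (gen 0) (t 0) @
     concat (map (\<lambda>i. word_pow (word_comm (gen (i - 1)) (gen i)) (t i)) [1..<k])"

definition power_set_P :: "nat \<Rightarrow> nat set" where
  "power_set_P p = {0, 1} \<union> {p ^ n | n. n \<ge> 1}"

definition center_of :: "('a, 'b) monoid_scheme \<Rightarrow> 'a set" where
  "center_of G = {z \<in> carrier G. \<forall>x \<in> carrier G. z \<otimes>\<^bsub>G\<^esub> x = x \<otimes>\<^bsub>G\<^esub> z}"

definition nilpotent_class_2 :: "('a, 'b) monoid_scheme \<Rightarrow> bool" where
  "nilpotent_class_2 G \<longleftrightarrow>
     derived G (carrier G) \<subseteq> center_of G \<and> derived G (carrier G) \<noteq> {\<one>\<^bsub>G\<^esub>}"

definition finite_p_group :: "('a, 'b) monoid_scheme \<Rightarrow> nat \<Rightarrow> bool" where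
  "finite_p_group G p \<longleftrightarrow> group G \<and> finite (carrier G) \<and> (\<exists>n. card (carrier G) = p ^ n)"

end

theory Submission
  imports Defs
begin

definition gcomm :: "('a, 'b) monoid_scheme \<Rightarrow> 'a \<Rightarrow> 'a \<Rightarrow> 'a" where
  "gcomm G x y = x \<otimes>\<^bsub>G\<^esub> y \<otimes>\<^bsub>G\<^esub> inv\<^bsub>G\<^esub> x \<otimes>\<^bsub>G\<^esub> inv\<^bsub>G\<^esub> y"

locale grp2 = group G for G (structure) +
  assumes central: "\<lbrakk>x \<in> carrier G; y \<in> carrier G; z \<in> carrier G\<rbrakk> \<Longrightarrow>
     gcomm G x y \<otimes> z = z \<otimes> gcomm G x y"
begin

abbreviation cm where "cm \<equiv> gcomm G"

definition Zc where "Zc = {c \<in> carrier G. \<forall>z\<in>carrier G. c \<otimes> z = z \<otimes> c}"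

lemma cm_closed[simp]: "x \<in> carrier G \<Longrightarrow> y \<in> carrier G \<Longrightarrow> cm x y \<in> carrier G"
  by (simp add: gcomm_def)

lemma cm_Zc: "x \<in> carrier G \<Longrightarrow> y \<in> carrier G \<Longrightarrow> cm x y \<in> Zc"
  using central by (simp add: Zc_def)

lemma Zc_carrier: "a \<in> Zc \<Longrightarrow> a \<in> carrier G" by (simp add: Zc_def)

lemma Zc_comm: "a \<in> Zc \<Longrightarrow> z \<in> carrier G \<Longrightarrow> a \<otimes> z = z \<otimes> a" by (simp add: Zc_def)

lemma ZcI: "a \<in> carrier G \<Longrightarrow> (\<And>z. z \<in> carrier G \<Longrightarrow> a \<otimes> z = z \<otimes> a) \<Longrightarrow> a \<in> Zc"
  by (simp add: Zc_def)

lemma Zc_mult: assumes a: "a \<in> Zc" "b \<in> Zc" shows "a \<otimes> b \<in> Zc"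
proof (rule ZcI)
  show "a \<otimes> b \<in> carrier G" using a Zc_carrier by simp
  fix z assume z: "z \<in> carrier G"
  have ac: "a \<in> carrier G" "b \<in> carrier G" using a Zc_carrier by auto
  have "a \<otimes> b \<otimes> z = a \<otimes> (z \<otimes> b)" using ac z Zc_comm[OF a(2) z] by (simp add: m_assoc)
  also have "\<dots> = (a \<otimes> z) \<otimes> b" using ac z by (simp add: m_assoc)
  also have "\<dots> = z \<otimes> (a \<otimes> b)" using ac z Zc_comm[OF a(1) z] by (simp add: m_assoc)
  finally show "a \<otimes> b \<otimes> z = z \<otimes> (a \<otimes> b)" .
qed

lemma Zc_inv: assumes a: "a \<in> Zc" shows "inv a \<in> Zc"
proof (rule ZcI)
  have ac: "a \<in> carrier G" using a Zc_carrier by auto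
  then show "inv a \<in> carrier G" by simp
  fix z assume z: "z \<in> carrier G"
  have "a \<otimes> (inv a \<otimes> z) = a \<otimes> (z \<otimes> inv a)"
  proof -
    have "a \<otimes> (inv a \<otimes> z) = z" using ac z by (simp flip: m_assoc)
    also have "\<dots> = (z \<otimes> a) \<otimes> inv a" using ac z by (simp add: m_assoc)
    also have "\<dots> = (a \<otimes> z) \<otimes> inv a" using Zc_comm[OF a z] by simp
    also have "\<dots> = a \<otimes> (z \<otimes> inv a)" using ac z by (simp only: m_assoc inv_closed)
    finally show ?thesis .
  qed
  then show "inv a \<otimes> z = z \<otimes> inv a" using ac z by (meson l_cancel inv_closed m_closed)
qed

lemma Zc_one: "\<one> \<in> Zc" by (simp add: Zc_def)


lemma Zc_pow: "a \<in> Zc \<Longrightarrow> a [^] (n::nat) \<in> Zc"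
  by (induct n) (simp_all add: Zc_one Zc_mult)

lemma inv_cancel_l[simp]: "x \<in> carrier G \<Longrightarrow> y \<in> carrier G \<Longrightarrow> inv x \<otimes> (x \<otimes> y) = y"
  by (simp flip: m_assoc)
lemma inv_cancel_r[simp]: "x \<in> carrier G \<Longrightarrow> y \<in> carrier G \<Longrightarrow> x \<otimes> (inv x \<otimes> y) = y"
  by (simp flip: m_assoc)

lemma cm_inv: "x \<in> carrier G \<Longrightarrow> y \<in> carrier G \<Longrightarrow> inv (cm x y) = cm y x"
  unfolding gcomm_def by (simp add: inv_mult_group m_assoc)

lemma swap: "x \<in> carrier G \<Longrightarrow> y \<in> carrier G \<Longrightarrow> x \<otimes> y = cm x y \<otimes> (y \<otimes> x)"
  by (simp add: gcomm_def m_assoc)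

lemma cm_one_right[simp]: "x \<in> carrier G \<Longrightarrow> cm x \<one> = \<one>"
  by (simp add: gcomm_def)
lemma cm_one_left[simp]: "x \<in> carrier G \<Longrightarrow> cm \<one> x = \<one>"
  by (simp add: gcomm_def)

lemma cm_Zc_left: "c \<in> Zc \<Longrightarrow> y \<in> carrier G \<Longrightarrow> cm c y = \<one>"
  unfolding gcomm_def using Zc_comm[of c y] Zc_carrier[of c] by (simp add: m_assoc)

lemma cm_mult_right: assumes "x \<in> carrier G" "y \<in> carrier G" "z \<in> carrier G"
  shows "cm x (y \<otimes> z) = cm x y \<otimes> cm x z"
proof -
  have "cm x (y \<otimes> z) = (x \<otimes> y \<otimes> inv x) \<otimes> cm x z \<otimes> inv y"
    using assms by (simp add: gcomm_def inv_mult_group m_assoc del: inv_inv)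
  also have "\<dots> = (x \<otimes> y \<otimes> inv x) \<otimes> (cm x z \<otimes> inv y)"
    using assms by (simp add: m_assoc)
  also have "\<dots> = (x \<otimes> y \<otimes> inv x) \<otimes> (inv y \<otimes> cm x z)"
    using assms central[of x z "inv y"] by simp
  also have "\<dots> = cm x y \<otimes> cm x z" using assms by (simp add: gcomm_def m_assoc)
  finally show ?thesis .
qed

lemma cm_mult_left: assumes "x \<in> carrier G" "y \<in> carrier G" "z \<in> carrier G"
  shows "cm (x \<otimes> y) z = cm x z \<otimes> cm y z"
proof -
  have "cm (x \<otimes> y) z = inv (cm z (x \<otimes> y))" using assms by (simp add: cm_inv)
  also have "\<dots> = inv (cm z x \<otimes> cm z y)" using assms by (simp add: cm_mult_right)
  also have "\<dots> = inv (cm z y) \<otimes> inv (cm z x)" using assms by (simp add: inv_mult_group)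
  also have "\<dots> = cm y z \<otimes> cm x z" using assms by (simp add: cm_inv)
  also have "\<dots> = cm x z \<otimes> cm y z" using assms central[of x z "cm y z"] by simp
  finally show ?thesis .
qed

lemma cm_Zc_right: "c \<in> Zc \<Longrightarrow> y \<in> carrier G \<Longrightarrow> cm y c = \<one>"
  using cm_inv[of c y] cm_Zc_left[of c y] Zc_carrier[of c] by (metis inv_one)

lemma cm_mult_Zc_left: "x \<in> carrier G \<Longrightarrow> c \<in> Zc \<Longrightarrow> y \<in> carrier G \<Longrightarrow> cm (x \<otimes> c) y = cm x y"
  using cm_mult_left[of x c y] cm_Zc_left[of c y] Zc_carrier[of c] by simp

lemma cm_mult_Zc_right: "x \<in> carrier G \<Longrightarrow> c \<in> Zc \<Longrightarrow> y \<in> carrier G \<Longrightarrow> cm y (x \<otimes> c) = cm y x"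
  using cm_mult_right[of y x c] cm_Zc_right[of c y] Zc_carrier[of c] by simp

lemma cm_pow_right: "x \<in> carrier G \<Longrightarrow> y \<in> carrier G \<Longrightarrow> cm x (y [^] (n::nat)) = cm x y [^] n"
proof (induct n)
  case (Suc n) then show ?case
    by (simp add: cm_mult_right)
qed simp

lemma cm_pow_left: "x \<in> carrier G \<Longrightarrow> y \<in> carrier G \<Longrightarrow> cm (x [^] (n::nat)) y = cm x y [^] n"
proof (induct n)
  case (Suc n) then show ?case
    by (simp add: cm_mult_left)
qed simp

lemma cm_inv_right: "x \<in> carrier G \<Longrightarrow> y \<in> carrier G \<Longrightarrow> cm x (inv y) = inv (cm x y)"
proof -
  assume a: "x \<in> carrier G" "y \<in> carrier G"
  have "cm x (inv y) \<otimes> cm x y = cm x (inv y \<otimes> y)" by (rule cm_mult_right[symmetric]) (use a in auto)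
  also have "\<dots> = \<one>" using a by (simp only: l_inv cm_one_right)
  finally have "cm x (inv y) \<otimes> cm x y = \<one>" .
  then have "inv (cm x y) = cm x (inv y)" using a by (intro inv_equality) simp_all
  then show ?thesis by simp
qed

lemma derived_Zc: assumes "H \<subseteq> carrier G" shows "derived G H \<subseteq> Zc"
proof
  fix x assume "x \<in> derived G H"
  then show "x \<in> Zc" unfolding derived_def
  proof induct
    case one then show ?case by (rule Zc_one)
  next
    case (incl h) then show ?case using assms cm_Zc by (auto simp: gcomm_def)
  next
    case (inv h) then show ?case using assms cm_Zc Zc_inv unfolding gcomm_def by blast
  next
    case (eng h1 h2) then show ?case using Zc_mult by auto
  qed
qed

end

lemma P_mult_p: assumes "t \<in> power_set_P p" "t \<noteq> 0" shows "p * t \<in> power_set_P p"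
proof -
  from assms have "t = 1 \<or> (\<exists>n\<ge>1. t = p ^ n)" by (auto simp: power_set_P_def)
  then show ?thesis
  proof
    assume "t = 1" then show ?thesis by (auto simp: power_set_P_def intro!: exI[of _ 1])
  next
    assume "\<exists>n\<ge>1. t = p ^ n"
    then obtain n where "t = p ^ n" by auto
    then show ?thesis by (auto simp: power_set_P_def intro!: exI[of _ "Suc n"])
  qed
qed

lemma NT1: assumes p: "Factorial_Ring.prime (p::nat)"
  shows "\<exists>r t. coprime r p \<and> t \<in> power_set_P p \<and> a = r * t"
proof (induction a rule: less_induct)
  case (less a)
  show ?case
  proof (cases "a = 0")
    case True then show ?thesis by (intro exI[of _ 1] exI[of _ 0]) (simp add: power_set_P_def)
  next
    case False
    show ?thesis
    proof (cases "p dvd a")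
      case True
      then obtain a' where a': "a = p * a'" by auto
      have p1: "p > 1" using p prime_gt_1_nat by auto
      have "a' < a" using a' False p1 by auto
      then obtain r t where rt: "coprime r p" "t \<in> power_set_P p" "a' = r * t" using less by blast
      have "t \<noteq> 0" using rt a' False by auto
      then have "p * t \<in> power_set_P p" using P_mult_p rt by auto
      then show ?thesis using rt a' by (intro exI[of _ r] exI[of _ "p*t"]) auto
    next
      case False
      then have "coprime a p" using prime_imp_coprime[OF p] by (simp add: coprime_commute)
      then show ?thesis by (intro exI[of _ a] exI[of _ 1]) (auto simp: power_set_P_def)
    qed
  qed
qed

locale grp2e = grp2 +
  fixes p M :: nat
  assumes prp: "Factorial_Ring.prime p"
    and expo: "x \<in> carrier G \<Longrightarrow> x [^] (p ^ M) = \<one>"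
begin

definition S :: "(nat \<Rightarrow> 'a) \<Rightarrow> nat \<Rightarrow> nat \<Rightarrow> 'a set" where "S Y lo k = generate G (Y ` {lo..<k})"
definition D :: "(nat \<Rightarrow> 'a) \<Rightarrow> nat \<Rightarrow> nat \<Rightarrow> 'a set" where "D Y lo k = derived G (S Y lo k)"
definition tup :: "nat \<Rightarrow> (nat \<Rightarrow> 'a) \<Rightarrow> bool" where "tup k Y \<longleftrightarrow> (\<forall>i<k. Y i \<in> carrier G)"

definition mv :: "nat \<Rightarrow> nat \<Rightarrow> (nat \<Rightarrow> 'a) \<Rightarrow> (nat \<Rightarrow> 'a) \<Rightarrow> bool" where "mv lo k Y Y' \<longleftrightarrow>
   (\<exists>i j. lo \<le> i \<and> i < k \<and> lo \<le> j \<and> j < k \<and> i \<noteq> j \<and> Y' = Y(i := Y i \<otimes> Y j)) \<or>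
   (\<exists>i j. lo \<le> i \<and> i < k \<and> lo \<le> j \<and> j < k \<and> Y' = Y(i := Y j, j := Y i)) \<or>
   (\<exists>i r. lo \<le> i \<and> i < k \<and> coprime r p \<and> Y' = Y(i := Y i [^] r))"

abbreviation reach where "reach lo k \<equiv> (mv lo k)\<^sup>*\<^sup>*"

lemma sub_pow_closed: "subgroup H G \<Longrightarrow> x \<in> H \<Longrightarrow> x [^] (n::nat) \<in> H"
  by (induct n) (auto intro: subgroup.m_closed subgroup.one_closed)

lemma tup_img: "tup k Y \<Longrightarrow> Y ` {lo..<k} \<subseteq> carrier G"
  by (auto simp: tup_def)

lemma S_subgroup: "tup k Y \<Longrightarrow> subgroup (S Y lo k) G"
  unfolding S_def by (rule generate_is_subgroup[OF tup_img])

lemma S_carrier: "tup k Y \<Longrightarrow> x \<in> S Y lo k \<Longrightarrow> x \<in> carrier G"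
  by (rule subgroup.mem_carrier[OF S_subgroup])

lemma Y_in_S: "lo \<le> i \<Longrightarrow> i < k \<Longrightarrow> Y i \<in> S Y lo k"
  unfolding S_def by (rule generate.incl) auto

lemma S_mono: "lo \<le> lo' \<Longrightarrow> S Y lo' k \<subseteq> S Y lo k"
  unfolding S_def by (rule mono_generate) auto

lemma S_empty: "S Y k k = {\<one>}"
proof -
  have "generate G {} = {\<one>}"
  proof
    show "generate G {} \<subseteq> {\<one>}"
    proof
      fix x assume "x \<in> generate G {}" then show "x \<in> {\<one>}"
        by induct auto
    qed
  qed (auto intro: generate.one)
  then show ?thesis by (simp add: S_def)
qed

lemma D_subgroup: "tup k Y \<Longrightarrow> subgroup (D Y lo k) G"
  unfolding D_def by (rule derived_is_subgroup[OF subgroup.subset[OF S_subgroup]])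

lemma D_mono: "lo \<le> lo' \<Longrightarrow> tup k Y \<Longrightarrow> D Y lo' k \<subseteq> D Y lo k"
  unfolding D_def by (rule mono_derived[OF S_mono])

lemma D_Zc: "tup k Y \<Longrightarrow> x \<in> D Y lo k \<Longrightarrow> x \<in> Zc"
  unfolding D_def using derived_Zc[OF subgroup.subset[OF S_subgroup]] by blast

lemma D_carrier: "tup k Y \<Longrightarrow> x \<in> D Y lo k \<Longrightarrow> x \<in> carrier G"
  using D_Zc Zc_carrier by blast

lemma cm_in_D: "tup k Y \<Longrightarrow> x \<in> S Y lo k \<Longrightarrow> y \<in> S Y lo k \<Longrightarrow> cm x y \<in> D Y lo k"
  unfolding D_def derived_def gcomm_def by (rule generate.incl) blast

lemma D_empty: "D Y k k = {\<one>}"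
proof -
  have "derived_set G {\<one>} = {\<one>}" by auto
  moreover have "generate G {\<one>} = {\<one>}"
  proof
    show "generate G {\<one>} \<subseteq> {\<one>}"
    proof
      fix x assume "x \<in> generate G {\<one>}" then show "x \<in> {\<one>}"
        by induct auto
    qed
  qed (auto intro: generate.one)
  ultimately show ?thesis by (simp add: D_def derived_def S_empty)
qed

lemma pow_N: "x \<in> carrier G \<Longrightarrow> x [^] (p ^ M * n + r) = x [^] r"
  by (simp add: nat_pow_mult[symmetric] nat_pow_pow[symmetric] expo)

lemma mv_tup: "mv lo k Y Y' \<Longrightarrow> tup k Y \<Longrightarrow> tup k Y'"
  unfolding mv_def tup_def by (elim disjE exE) auto

lemma mv_fix: "mv lo k Y Y' \<Longrightarrow> i < lo \<Longrightarrow> Y' i = Y i"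
  unfolding mv_def by (elim disjE exE) auto

lemma mv_mono: "lo' \<le> lo \<Longrightarrow> mv lo k Y Y' \<Longrightarrow> mv lo' k Y Y'"
  unfolding mv_def
  apply (elim disjE exE conjE)
    apply (rule disjI1; blast intro: le_trans)
   apply (rule disjI2, rule disjI1; blast intro: le_trans)
  apply (rule disjI2, rule disjI2; blast intro: le_trans)
  done

lemma mv_gen: assumes m: "mv lo k Y Y'" and t: "tup k Y" and l: "lo' \<le> lo"
  shows "S Y' lo' k = S Y lo' k"
proof -
  have t': "tup k Y'" using mv_tup m t by blast
  have sg: "subgroup (S Y lo' k) G" "subgroup (S Y' lo' k) G" using S_subgroup t t' by auto
  have A: "Y' l \<in> S Y lo' k" if "lo' \<le> l" "l < k" for l
    using m that l unfolding mv_def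
    by (elim disjE exE) (auto intro!: subgroup.m_closed[OF sg(1)] sub_pow_closed[OF sg(1)] Y_in_S)
  have B: "Y l \<in> S Y' lo' k" if "lo' \<le> l" "l < k" for l
    using m unfolding mv_def
  proof (elim disjE exE conjE)
    fix i j assume ij: "lo \<le> i" "i < k" "lo \<le> j" "j < k" "i \<noteq> j" and Y': "Y' = Y(i := Y i \<otimes> Y j)"
    show ?thesis
    proof (cases "l = i")
      case True
      have "Y i = Y' i \<otimes> inv (Y' j)" using ij Y' t by (simp add: tup_def m_assoc)
      also have "\<dots> \<in> S Y' lo' k"
        using ij l by (intro subgroup.m_closed[OF sg(2)] subgroup.m_inv_closed[OF sg(2)] Y_in_S) auto
      finally show ?thesis using True by simp
    next
      case False then have "Y l = Y' l" using Y' by simp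
      then show ?thesis using that Y_in_S by simp
    qed
  next
    fix i j assume ij: "lo \<le> i" "i < k" "lo \<le> j" "j < k" and Y': "Y' = Y(i := Y j, j := Y i)"
    have "Y l = Y' i \<or> Y l = Y' j \<or> Y l = Y' l" using Y' by auto
    then show ?thesis using that ij l Y_in_S by (metis le_trans)
  next
    fix i r assume ij: "lo \<le> i" "i < k" "coprime r p" and Y': "Y' = Y(i := Y i [^] r)"
    show ?thesis
    proof (cases "l = i")
      case True
      have "r \<noteq> 0"
      proof
        assume "r = 0"
        then have "p = 1" using ij by simp
        then show False using prp by simp
      qed
      then obtain x y where xy: "r * x = p ^ M * y + gcd r (p ^ M)" using bezout_nat by blast
      have "gcd r (p ^ M) = 1" using ij by simp
      then have "Y i = Y i [^] (p ^ M * y + 1)" using t ij by (simp add: pow_N tup_def del: One_nat_def)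
      also have "\<dots> = (Y' i) [^] x" using xy Y' \<open>gcd r (p ^ M) = 1\<close> t ij
        by (simp add: nat_pow_pow tup_def)
      also have "\<dots> \<in> S Y' lo' k" using ij l by (intro sub_pow_closed[OF sg(2)] Y_in_S) auto
      finally show ?thesis using True by simp
    next
      case False then have "Y l = Y' l" using Y' by simp
      then show ?thesis using that Y_in_S by simp
    qed
  qed
  have "S Y' lo' k \<subseteq> S Y lo' k"
    unfolding S_def[of Y'] using A by (intro generate_subgroup_incl[OF _ sg(1)]) auto
  moreover have "S Y lo' k \<subseteq> S Y' lo' k"
    unfolding S_def[of Y] using B by (intro generate_subgroup_incl[OF _ sg(2)]) auto
  ultimately show ?thesis by auto
qed

lemma reach_props: assumes "reach lo k Y Y'" "tup k Y"
  shows "tup k Y' \<and> (\<forall>i<lo. Y' i = Y i) \<and> (\<forall>lo'\<le>lo. S Y' lo' k = S Y lo' k)"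
  using assms
proof (induction rule: rtranclp_induct)
  case (step y z) then show ?case using mv_tup mv_fix mv_gen by metis
qed simp

lemma reach_tup: "reach lo k Y Y' \<Longrightarrow> tup k Y \<Longrightarrow> tup k Y'" using reach_props by blast
lemma reach_fix: "reach lo k Y Y' \<Longrightarrow> tup k Y \<Longrightarrow> i < lo \<Longrightarrow> Y' i = Y i" using reach_props by blast
lemma reach_S: "reach lo k Y Y' \<Longrightarrow> tup k Y \<Longrightarrow> lo' \<le> lo \<Longrightarrow> S Y' lo' k = S Y lo' k"
  using reach_props by blast
lemma reach_D: "reach lo k Y Y' \<Longrightarrow> tup k Y \<Longrightarrow> lo' \<le> lo \<Longrightarrow> D Y' lo' k = D Y lo' k"
  using reach_S by (simp add: D_def)

lemma reach_mono: "reach lo k Y Y' \<Longrightarrow> lo' \<le> lo \<Longrightarrow> reach lo' k Y Y'"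
proof (induction rule: rtranclp_induct)
  case (step y z) then show ?case using mv_mono by (meson rtranclp.rtrancl_into_rtrancl)
qed simp

end

context grp2 begin

lemma zc_mid: assumes "c \<in> Zc" "a \<in> carrier G" "b \<in> carrier G"
  shows "a \<otimes> c \<otimes> b = a \<otimes> b \<otimes> c"
proof -
  have cc: "c \<in> carrier G" using assms Zc_carrier by auto
  have "a \<otimes> c \<otimes> b = a \<otimes> (c \<otimes> b)" using assms cc by (simp add: m_assoc)
  also have "\<dots> = a \<otimes> (b \<otimes> c)" by (subst Zc_comm[OF assms(1,3)]) (rule refl)
  also have "\<dots> = a \<otimes> b \<otimes> c" using assms cc by (simp add: m_assoc)
  finally show ?thesis .
qed

lemma zc_front: assumes "c \<in> Zc" "b \<in> carrier G"
  shows "c \<otimes> b = b \<otimes> c"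
  using Zc_comm[OF assms] .

lemma rearr1: assumes U: "U \<in> carrier G" "s \<in> carrier G" "W \<in> carrier G" "s' \<in> carrier G"
  and c: "c \<in> Zc" "c' \<in> Zc"
  shows "U \<otimes> s \<otimes> c \<otimes> (W \<otimes> s' \<otimes> c') = U \<otimes> W \<otimes> (s \<otimes> s') \<otimes> (cm s W \<otimes> c \<otimes> c')"
proof -
  have cc: "c \<in> carrier G" "c' \<in> carrier G" using c Zc_carrier by auto
  have cz: "cm s W \<in> Zc" "cm s W \<in> carrier G" using U cm_Zc by auto
  have "U \<otimes> s \<otimes> c \<otimes> (W \<otimes> s' \<otimes> c') = U \<otimes> s \<otimes> (W \<otimes> s' \<otimes> c') \<otimes> c"
    using U cc by (intro zc_mid c) auto
  also have "\<dots> = U \<otimes> (s \<otimes> W) \<otimes> s' \<otimes> (c' \<otimes> c)" using U cc by (simp add: m_assoc)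
  also have "\<dots> = U \<otimes> (cm s W \<otimes> (W \<otimes> s)) \<otimes> s' \<otimes> (c' \<otimes> c)" using U by (simp add: swap[symmetric])
  also have "\<dots> = U \<otimes> (W \<otimes> s) \<otimes> s' \<otimes> cm s W \<otimes> (c' \<otimes> c)"
  proof -
    have "U \<otimes> (cm s W \<otimes> (W \<otimes> s)) = U \<otimes> (W \<otimes> s) \<otimes> cm s W"
      using zc_mid[OF cz(1) U(1), of "W \<otimes> s"] U cz by (simp add: m_assoc)
    moreover have "U \<otimes> (W \<otimes> s) \<otimes> cm s W \<otimes> s' = U \<otimes> (W \<otimes> s) \<otimes> s' \<otimes> cm s W"
      using zc_mid[OF cz(1), of "U \<otimes> (W \<otimes> s)" s'] U by simp
    ultimately show ?thesis by simp
  qed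
  also have "\<dots> = U \<otimes> W \<otimes> (s \<otimes> s') \<otimes> (cm s W \<otimes> (c' \<otimes> c))" using U cc cz by (simp add: m_assoc)
  also have "c' \<otimes> c = c \<otimes> c'" using zc_front[OF c(1) cc(2)] by simp
  finally show ?thesis using U cc cz by (simp add: m_assoc)
qed

lemma pow_mult_der: assumes K: "subgroup K G" and xy: "x \<in> K" "y \<in> K"
  shows "\<exists>d \<in> derived G K. (x \<otimes> y) [^] (n::nat) = x [^] n \<otimes> y [^] n \<otimes> d"
proof (induct n)
  case 0 show ?case using subgroup.one_closed[OF derived_is_subgroup[OF subgroup.subset[OF K]]]
    by (intro bexI[of _ \<one>]) auto
next
  case (Suc n)
  then obtain d where d: "d \<in> derived G K" "(x \<otimes> y) [^] n = x [^] n \<otimes> y [^] n \<otimes> d" by blast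
  have xc: "x \<in> carrier G" "y \<in> carrier G" using subgroup.mem_carrier[OF K xy(1)] subgroup.mem_carrier[OF K xy(2)] by auto
  have dz: "d \<in> Zc" "d \<in> carrier G" using d derived_Zc[OF subgroup.subset[OF K]] Zc_carrier by auto
  define e where "e = cm (y [^] n) x"
  have ez: "e \<in> Zc" "e \<in> carrier G" using xc cm_Zc e_def by auto
  have ed: "e \<in> derived G K"
  proof -
    have "y [^] n \<in> K" using K xy(2) by (induct n) (auto intro: subgroup.m_closed subgroup.one_closed)
    then show ?thesis unfolding e_def derived_def gcomm_def using xy by (intro generate.incl) blast
  qed
  have "(x \<otimes> y) [^] Suc n = x [^] n \<otimes> y [^] n \<otimes> d \<otimes> (x \<otimes> y)" using d by simp
  also have "\<dots> = x [^] n \<otimes> y [^] n \<otimes> (x \<otimes> y) \<otimes> d" using xc dz by (intro zc_mid) auto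
  also have "\<dots> = x [^] n \<otimes> (y [^] n \<otimes> x) \<otimes> y \<otimes> d" using xc by (simp add: m_assoc)
  also have "\<dots> = x [^] n \<otimes> (e \<otimes> (x \<otimes> y [^] n)) \<otimes> y \<otimes> d" using xc by (simp add: swap[symmetric] e_def)
  also have "\<dots> = x [^] n \<otimes> e \<otimes> (x \<otimes> y [^] n) \<otimes> y \<otimes> d" using xc ez by (simp add: m_assoc)
  also have "\<dots> = x [^] n \<otimes> (x \<otimes> y [^] n) \<otimes> e \<otimes> y \<otimes> d" using xc ez by (subst zc_mid[OF ez(1)]) auto
  also have "\<dots> = x [^] n \<otimes> (x \<otimes> y [^] n) \<otimes> y \<otimes> e \<otimes> d" using xc ez by (subst zc_mid[OF ez(1)]) auto
  also have "\<dots> = x [^] Suc n \<otimes> y [^] Suc n \<otimes> (e \<otimes> d)" using xc ez dz by (simp add: m_assoc)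
  finally show ?case using ed d(1) subgroup.m_closed[OF derived_is_subgroup[OF subgroup.subset[OF K]]] by blast
qed

end

context grp2e begin

lemma inv_as_pow: "x \<in> carrier G \<Longrightarrow> inv x = x [^] (p ^ M - 1)"
proof -
  assume x: "x \<in> carrier G"
  have pM: "p ^ M \<ge> 1" using prime_gt_0_nat[OF prp] by (simp add: Suc_le_eq)
  have e: "p ^ M = Suc (p ^ M - 1)" using pM by simp
  have "x [^] (p ^ M - 1) \<otimes> x = x [^] (p ^ M)" by (subst (2) e) (simp only: nat_pow_Suc)
  also have "\<dots> = \<one>" using expo x by simp
  finally show ?thesis using x by (intro inv_equality) auto
qed

lemma Tform: assumes t: "tup k Y" and lo: "lo < k" and v: "v \<in> S Y lo k"
  shows "\<exists>a s c. s \<in> S Y (Suc lo) k \<and> c \<in> D Y lo k \<and> v = Y lo [^] (a::nat) \<otimes> s \<otimes> c"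
proof -
  have sgS: "subgroup (S Y (Suc lo) k) G" and sgD: "subgroup (D Y lo k) G"
    and sgS0: "subgroup (S Y lo k) G" using S_subgroup D_subgroup t by auto
  have xc: "Y lo \<in> carrier G" using t lo by (simp add: tup_def)
  from v show ?thesis unfolding S_def[of Y lo k]
  proof induct
    case one
    show ?case using subgroup.one_closed[OF sgS] subgroup.one_closed[OF sgD]
      by (intro exI[of _ 0] exI[of _ \<one>]) auto
  next
    case (incl h)
    then obtain i where i: "lo \<le> i" "i < k" "h = Y i" by auto
    show ?case
    proof (cases "i = lo")
      case True
      then show ?thesis using subgroup.one_closed[OF sgS] subgroup.one_closed[OF sgD] i xc
        by (intro exI[of _ 1] exI[of _ \<one>]) auto
    next
      case False
      then have "Y i \<in> S Y (Suc lo) k" using i Y_in_S by auto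
      then show ?thesis using subgroup.one_closed[OF sgD] i t S_carrier[OF t]
        by (intro exI[of _ 0] exI[of _ "Y i"] exI[of _ \<one>]) auto
    qed
  next
    case (inv h)
    then obtain i where i: "lo \<le> i" "i < k" "h = Y i" by auto
    show ?case
    proof (cases "i = lo")
      case True
      then show ?thesis using subgroup.one_closed[OF sgS] subgroup.one_closed[OF sgD] i xc inv_as_pow
        by (intro exI[of _ "p ^ M - 1"] exI[of _ \<one>]) auto
    next
      case False
      then have "inv (Y i) \<in> S Y (Suc lo) k" using i Y_in_S subgroup.m_inv_closed[OF sgS] by auto
      then show ?thesis using subgroup.one_closed[OF sgD] i t S_carrier[OF t]
        by (intro exI[of _ 0] exI[of _ "inv (Y i)"] exI[of _ \<one>]) auto
    qed
  next
    case (eng h1 h2)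
    from eng(2) obtain a s c where A: "s \<in> S Y (Suc lo) k" "c \<in> D Y lo k" "h1 = Y lo [^] (a::nat) \<otimes> s \<otimes> c" by blast
    from eng(4) obtain b s' c' where B: "s' \<in> S Y (Suc lo) k" "c' \<in> D Y lo k" "h2 = Y lo [^] (b::nat) \<otimes> s' \<otimes> c'" by blast
    have sc: "s \<in> carrier G" "s' \<in> carrier G" using A B S_carrier t by auto
    have cz: "c \<in> Zc" "c' \<in> Zc" using A B D_Zc t by auto
    have sS: "s \<in> S Y lo k" using A S_mono[of lo "Suc lo" Y k] by auto
    have xb: "Y lo [^] b \<in> S Y lo k" using sub_pow_closed[OF sgS0] Y_in_S lo by auto
    have "h1 \<otimes> h2 = Y lo [^] a \<otimes> Y lo [^] b \<otimes> (s \<otimes> s') \<otimes> (cm s (Y lo [^] b) \<otimes> c \<otimes> c')"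
      unfolding A(3) B(3) using xc sc cz by (intro rearr1) auto
    also have "\<dots> = Y lo [^] (a + b) \<otimes> (s \<otimes> s') \<otimes> (cm s (Y lo [^] b) \<otimes> c \<otimes> c')"
      using xc by (simp only: nat_pow_mult)
    finally have eq: "h1 \<otimes> h2 = Y lo [^] (a + b) \<otimes> (s \<otimes> s') \<otimes> (cm s (Y lo [^] b) \<otimes> c \<otimes> c')" .
    have m1: "s \<otimes> s' \<in> S Y (Suc lo) k" using A B subgroup.m_closed[OF sgS] by blast
    have m2: "cm s (Y lo [^] b) \<otimes> c \<otimes> c' \<in> D Y lo k"
      using A B cm_in_D[OF t sS xb] subgroup.m_closed[OF sgD] by blast
    show ?case using eq m1 m2 by blast
  qed
qed

lemma cm_self: "x \<in> carrier G \<Longrightarrow> cm x x = \<one>"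
  by (simp add: gcomm_def m_assoc)

lemma Rform_comm: assumes t: "tup k Y" and lo: "lo < k" and h: "h1 \<in> S Y lo k" "h2 \<in> S Y lo k"
  shows "\<exists>v z'. v \<in> S Y (Suc lo) k \<and> z' \<in> D Y (Suc lo) k \<and> cm h1 h2 = cm (Y lo) v \<otimes> z'"
proof -
  have sgS: "subgroup (S Y (Suc lo) k) G" using S_subgroup t by auto
  have x: "Y lo \<in> carrier G" using t lo by (simp add: tup_def)
  from Tform[OF t lo h(1)] obtain a s c where A: "s \<in> S Y (Suc lo) k" "c \<in> D Y lo k" "h1 = Y lo [^] (a::nat) \<otimes> s \<otimes> c" by blast
  from Tform[OF t lo h(2)] obtain b s' c' where B: "s' \<in> S Y (Suc lo) k" "c' \<in> D Y lo k" "h2 = Y lo [^] (b::nat) \<otimes> s' \<otimes> c'" by blast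
  have sc: "s \<in> carrier G" "s' \<in> carrier G" using A B S_carrier t by auto
  have cz: "c \<in> Zc" "c' \<in> Zc" using A B D_Zc t by auto
  have "cm h1 h2 = cm (Y lo [^] a \<otimes> s) (Y lo [^] b \<otimes> s')"
    unfolding A(3) B(3) using x sc cz Zc_carrier[OF cz(1)] Zc_carrier[OF cz(2)]
    by (simp add: cm_mult_Zc_left cm_mult_Zc_right)
  also have "\<dots> = (cm (Y lo [^] a) (Y lo [^] b) \<otimes> cm s (Y lo [^] b)) \<otimes> (cm (Y lo [^] a) s' \<otimes> cm s s')"
    using x sc by (simp add: cm_mult_left cm_mult_right)
  also have "cm (Y lo [^] a) (Y lo [^] b) = \<one>"
    by (simp only: cm_pow_left[OF x nat_pow_closed[OF x]] cm_pow_right[OF x x] cm_self[OF x] nat_pow_one)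
  also have "cm (Y lo [^] a) s' = cm (Y lo) (s' [^] a)" by (simp only: cm_pow_left[OF x sc(2)] cm_pow_right[OF x sc(2)])
  also have "cm s (Y lo [^] b) = cm (Y lo) (inv (s [^] b))"
  proof -
    have "cm s (Y lo [^] b) = inv (cm (Y lo [^] b) s)" using x sc by (simp only: cm_inv nat_pow_closed)
    also have "\<dots> = inv (cm (Y lo) (s [^] b))" by (simp only: cm_pow_left[OF x sc(1)] cm_pow_right[OF x sc(1)])
    also have "\<dots> = cm (Y lo) (inv (s [^] b))" using x sc by (simp only: cm_inv_right nat_pow_closed)
    finally show ?thesis .
  qed
  finally have "cm h1 h2 = cm (Y lo) (inv (s [^] b) \<otimes> s' [^] a) \<otimes> cm s s'"
    using x sc by (simp add: cm_mult_right m_assoc)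
  moreover have "inv (s [^] b) \<otimes> s' [^] a \<in> S Y (Suc lo) k"
    using A B by (intro subgroup.m_closed[OF sgS] subgroup.m_inv_closed[OF sgS] sub_pow_closed[OF sgS]) auto
  moreover have "cm s s' \<in> D Y (Suc lo) k" using A B cm_in_D t by auto
  ultimately show ?thesis by blast
qed

lemma Rform: assumes t: "tup k Y" and lo: "lo < k" and z: "z \<in> D Y lo k"
  shows "\<exists>v z'. v \<in> S Y (Suc lo) k \<and> z' \<in> D Y (Suc lo) k \<and> z = cm (Y lo) v \<otimes> z'"
proof -
  have sgS: "subgroup (S Y (Suc lo) k) G" and sgD: "subgroup (D Y (Suc lo) k) G"
    using S_subgroup D_subgroup t by auto
  have x: "Y lo \<in> carrier G" using t lo by (simp add: tup_def)
  from z show ?thesis unfolding D_def[of Y lo k] derived_def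
  proof induct
    case one
    show ?case using subgroup.one_closed[OF sgS] subgroup.one_closed[OF sgD] x
      by (intro exI[of _ \<one>]) auto
  next
    case (incl h)
    then obtain h1 h2 where "h1 \<in> S Y lo k" "h2 \<in> S Y lo k" "h = cm h1 h2" by (auto simp: gcomm_def)
    then show ?case using Rform_comm[OF t lo] by blast
  next
    case (inv h)
    then obtain h1 h2 where hh: "h1 \<in> S Y lo k" "h2 \<in> S Y lo k" "h = cm h1 h2" by (auto simp: gcomm_def)
    then have "inv h = cm h2 h1" using S_carrier t by (simp add: cm_inv)
    then show ?case using Rform_comm[OF t lo hh(2,1)] by metis
  next
    case (eng h1 h2)
    from eng(2) obtain v z where A: "v \<in> S Y (Suc lo) k" "z \<in> D Y (Suc lo) k" "h1 = cm (Y lo) v \<otimes> z" by blast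
    from eng(4) obtain v' z' where B: "v' \<in> S Y (Suc lo) k" "z' \<in> D Y (Suc lo) k" "h2 = cm (Y lo) v' \<otimes> z'" by blast
    have vc: "v \<in> carrier G" "v' \<in> carrier G" using A B S_carrier t by auto
    have zz: "z \<in> Zc" "z' \<in> Zc" "z \<in> carrier G" "z' \<in> carrier G" using A B D_Zc Zc_carrier t by auto
    have "h1 \<otimes> h2 = cm (Y lo) v \<otimes> z \<otimes> cm (Y lo) v' \<otimes> z'" unfolding A B using x vc zz by (simp add: m_assoc)
    also have "\<dots> = cm (Y lo) v \<otimes> cm (Y lo) v' \<otimes> z \<otimes> z'" using x vc zz by (subst zc_mid) auto
    also have "\<dots> = cm (Y lo) (v \<otimes> v') \<otimes> (z \<otimes> z')" using x vc zz by (simp add: cm_mult_right m_assoc)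
    finally show ?case using A B subgroup.m_closed[OF sgS] subgroup.m_closed[OF sgD] by blast
  qed
qed

end

context grp2e begin

lemma mv_reach: "mv lo k Y Y' \<Longrightarrow> reach lo k Y Y'" by auto

lemma two: "tup k Y \<Longrightarrow> lo \<le> i \<Longrightarrow> i < k \<Longrightarrow> lo \<le> j \<Longrightarrow> j < k \<Longrightarrow> i \<noteq> j \<Longrightarrow>
  \<exists>Y' g d. reach lo k Y Y' \<and> d \<in> D Y lo k \<and> Y i [^] (a::nat) \<otimes> Y j [^] (b::nat) = Y' i [^] (g::nat) \<otimes> d"
proof (induction "a + b" arbitrary: a b Y rule: less_induct)
  case less
  note t = less(2) and ij = less(3-7)
  have x: "Y i \<in> carrier G" and y: "Y j \<in> carrier G" using t ij by (auto simp: tup_def)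
  have sgD: "subgroup (D Y lo k) G" using D_subgroup t by auto
  have sgS: "subgroup (S Y lo k) G" using S_subgroup t by auto
  have xS: "Y i \<in> S Y lo k" and yS: "Y j \<in> S Y lo k" using Y_in_S ij by auto
  show ?case
  proof (cases "b = 0")
    case True
    then show ?thesis using x subgroup.one_closed[OF sgD]
      by (intro exI[of _ Y] exI[of _ a] exI[of _ \<one>]) auto
  next
    case b0: False
    show ?thesis
    proof (cases "a = 0")
      case True
      have m: "mv lo k Y (Y(i := Y j, j := Y i))" unfolding mv_def using ij by blast
      show ?thesis using True m y subgroup.one_closed[OF sgD] ij
        by (intro exI[of _ "Y(i := Y j, j := Y i)"] exI[of _ b] exI[of _ \<one>]) auto
    next
      case a0: False
      show ?thesis
      proof (cases "a \<le> b")
        case True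
        define Y1 where "Y1 = Y(i := Y i \<otimes> Y j)"
        have m: "mv lo k Y Y1" unfolding mv_def Y1_def using ij by blast
        have t1: "tup k Y1" using mv_tup[OF m t] .
        obtain d1 where d1: "d1 \<in> D Y lo k" "(Y i \<otimes> Y j) [^] a = Y i [^] a \<otimes> Y j [^] a \<otimes> d1"
          using pow_mult_der[OF sgS xS yS, of a] unfolding D_def by blast
        have d1c: "d1 \<in> Zc" "d1 \<in> carrier G" "inv d1 \<in> Zc" using d1 D_Zc t Zc_carrier Zc_inv by auto
        have "Y i [^] a \<otimes> Y j [^] b = Y i [^] a \<otimes> Y j [^] a \<otimes> Y j [^] (b - a)"
          using True x y by (simp add: m_assoc nat_pow_mult)
        also have "Y i [^] a \<otimes> Y j [^] a = (Y i \<otimes> Y j) [^] a \<otimes> inv d1"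
          using d1 x y d1c by (simp add: m_assoc)
        also have "(Y i \<otimes> Y j) [^] a \<otimes> inv d1 \<otimes> Y j [^] (b - a) = (Y i \<otimes> Y j) [^] a \<otimes> Y j [^] (b - a) \<otimes> inv d1"
          using x y d1c by (intro zc_mid) auto
        also have "\<dots> = Y1 i [^] a \<otimes> Y1 j [^] (b - a) \<otimes> inv d1" using ij by (simp add: Y1_def)
        finally have eq1: "Y i [^] a \<otimes> Y j [^] b = Y1 i [^] a \<otimes> Y1 j [^] (b - a) \<otimes> inv d1" .
        have "a + (b - a) < a + b" using a0 b0 True by simp
        from less(1)[OF this t1 ij] obtain Y2 g d2 where
          Y2: "reach lo k Y1 Y2" "d2 \<in> D Y1 lo k" "Y1 i [^] a \<otimes> Y1 j [^] (b - a) = Y2 i [^] (g::nat) \<otimes> d2"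
          by blast
        have d2: "d2 \<in> D Y lo k" using Y2(2) reach_D[OF mv_reach[OF m] t, of lo] by simp
        have y2c: "Y2 i \<in> carrier G" using reach_tup[OF Y2(1) t1] ij by (simp add: tup_def)
        have "Y i [^] a \<otimes> Y j [^] b = Y2 i [^] g \<otimes> (d2 \<otimes> inv d1)"
          using eq1 Y2(3) D_carrier[OF t d2] d1c x y2c by (simp add: m_assoc)
        moreover have "d2 \<otimes> inv d1 \<in> D Y lo k" using d2 d1 subgroup.m_closed[OF sgD] subgroup.m_inv_closed[OF sgD] by blast
        moreover have "reach lo k Y Y2" using m Y2(1) by (meson converse_rtranclp_into_rtranclp)
        ultimately show ?thesis by blast
      next
        case False
        define Y1 where "Y1 = Y(j := Y j \<otimes> Y i)"
        have m: "mv lo k Y Y1" unfolding mv_def Y1_def using ij by blast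
        have t1: "tup k Y1" using mv_tup[OF m t] .
        obtain d1 where d1: "d1 \<in> D Y lo k" "(Y j \<otimes> Y i) [^] b = Y j [^] b \<otimes> Y i [^] b \<otimes> d1"
          using pow_mult_der[OF sgS yS xS, of b] unfolding D_def by blast
        have d1c: "d1 \<in> Zc" "d1 \<in> carrier G" "inv d1 \<in> Zc" using d1 D_Zc t Zc_carrier Zc_inv by auto
        define e where "e = cm (Y i [^] b) (Y j [^] b)"
        have ez: "e \<in> Zc" "e \<in> carrier G" using x y cm_Zc e_def by auto
        have eD: "e \<in> D Y lo k" unfolding e_def using x y xS yS
          by (intro cm_in_D[OF t] sub_pow_closed[OF sgS])
        have ea: "Y i [^] a = Y i [^] (a - b) \<otimes> Y i [^] b" using False x by (simp add: nat_pow_mult)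
        have "Y i [^] a \<otimes> Y j [^] b = Y i [^] (a - b) \<otimes> Y i [^] b \<otimes> Y j [^] b"
          by (subst ea) (rule refl)
        also have "\<dots> = Y i [^] (a - b) \<otimes> (Y i [^] b \<otimes> Y j [^] b)" using x y by (intro m_assoc) auto
        also have "Y i [^] b \<otimes> Y j [^] b = e \<otimes> (Y j [^] b \<otimes> Y i [^] b)"
          unfolding e_def using x y by (intro swap) auto
        also have "Y j [^] b \<otimes> Y i [^] b = (Y j \<otimes> Y i) [^] b \<otimes> inv d1"
          using d1 x y d1c by (simp add: m_assoc)
        also have "e \<otimes> ((Y j \<otimes> Y i) [^] b \<otimes> inv d1) = (Y j \<otimes> Y i) [^] b \<otimes> (e \<otimes> inv d1)"
        proof -
          have W: "(Y j \<otimes> Y i) [^] b \<in> carrier G" using x y by simp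
          have "e \<otimes> ((Y j \<otimes> Y i) [^] b \<otimes> inv d1) = (e \<otimes> (Y j \<otimes> Y i) [^] b) \<otimes> inv d1"
            using W ez d1c by (simp add: m_assoc)
          also have "\<dots> = ((Y j \<otimes> Y i) [^] b \<otimes> e) \<otimes> inv d1"
            by (subst zc_front[OF ez(1) W]) (rule refl)
          also have "\<dots> = (Y j \<otimes> Y i) [^] b \<otimes> (e \<otimes> inv d1)"
            using W ez d1c by (simp add: m_assoc)
          finally show ?thesis .
        qed
        also have "Y i [^] (a - b) \<otimes> ((Y j \<otimes> Y i) [^] b \<otimes> (e \<otimes> inv d1)) = Y1 i [^] (a - b) \<otimes> Y1 j [^] b \<otimes> (e \<otimes> inv d1)"
          using ij x y ez d1c by (simp add: Y1_def m_assoc)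
        finally have eq1: "Y i [^] a \<otimes> Y j [^] b = Y1 i [^] (a - b) \<otimes> Y1 j [^] b \<otimes> (e \<otimes> inv d1)" .
        have "(a - b) + b < a + b" using a0 b0 False by simp
        from less(1)[OF this t1 ij] obtain Y2 g d2 where
          Y2: "reach lo k Y1 Y2" "d2 \<in> D Y1 lo k" "Y1 i [^] (a - b) \<otimes> Y1 j [^] b = Y2 i [^] (g::nat) \<otimes> d2"
          by blast
        have d2: "d2 \<in> D Y lo k" using Y2(2) reach_D[OF mv_reach[OF m] t, of lo] by simp
        have y2c: "Y2 i \<in> carrier G" using reach_tup[OF Y2(1) t1] ij by (simp add: tup_def)
        have "Y i [^] a \<otimes> Y j [^] b = Y2 i [^] g \<otimes> (d2 \<otimes> (e \<otimes> inv d1))"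
          using eq1 Y2(3) D_carrier[OF t d2] d1c ez x y2c by (simp add: m_assoc)
        moreover have "d2 \<otimes> (e \<otimes> inv d1) \<in> D Y lo k"
          using d2 d1 eD subgroup.m_closed[OF sgD] subgroup.m_inv_closed[OF sgD] by blast
        moreover have "reach lo k Y Y2" using m Y2(1) by (meson converse_rtranclp_into_rtranclp)
        ultimately show ?thesis by blast
      qed
    qed
  qed
qed

end

context grp2e begin

abbreviation PP where "PP \<equiv> power_set_P p"

lemma single: assumes t: "tup k Y" and i: "lo \<le> i" "i < k"
  shows "\<exists>Y' t. reach lo k Y Y' \<and> t \<in> PP \<and> Y i [^] (g::nat) = Y' i [^] t"
proof -
  obtain r t where rt: "coprime r p" "t \<in> PP" "g = r * t" using NT1[OF prp] by blast
  have m: "mv lo k Y (Y(i := Y i [^] r))" unfolding mv_def using i rt by blast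
  have x: "Y i \<in> carrier G" using t i by (simp add: tup_def)
  have "Y i [^] g = (Y(i := Y i [^] r)) i [^] t" using x rt by (simp add: nat_pow_pow)
  then show ?thesis using m rt by blast
qed

lemma LA: "tup k Y \<Longrightarrow> lo \<le> k \<Longrightarrow> v \<in> S Y lo k \<Longrightarrow>
  \<exists>Y' t c. reach lo k Y Y' \<and> t \<in> PP \<and> c \<in> D Y lo k \<and> v = Y' lo [^] t \<otimes> c"
proof (induction "k - lo" arbitrary: lo Y v)
  case 0
  then have "lo = k" by simp
  then have "v = \<one>" "\<one> \<in> D Y lo k" using 0 S_empty D_empty by auto
  moreover have "(0::nat) \<in> PP" by (simp add: power_set_P_def)
  ultimately show ?case by (intro exI[of _ Y] exI[of _ 0] exI[of _ \<one>]) auto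
next
  case (Suc n)
  note t = Suc(3)
  have lo: "lo < k" using Suc by simp
  have x: "Y lo \<in> carrier G" using t lo by (simp add: tup_def)
  have sgD: "subgroup (D Y lo k) G" using D_subgroup t by auto
  from Tform[OF t lo Suc(5)] obtain a s c where
    A: "s \<in> S Y (Suc lo) k" "c \<in> D Y lo k" "v = Y lo [^] (a::nat) \<otimes> s \<otimes> c" by blast
  have cc: "c \<in> carrier G" "c \<in> Zc" using A D_carrier D_Zc t by auto
  obtain Y2 g d where Y2: "reach lo k Y Y2" "d \<in> D Y lo k" "v = Y2 lo [^] (g::nat) \<otimes> d"
  proof (cases "Suc lo = k")
    case True
    then have "s = \<one>" using A S_empty by auto
    then have "v = Y lo [^] a \<otimes> c" using A x cc by simp
    then show ?thesis using that[of Y c a] A by auto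
  next
    case False
    then have l2: "Suc lo \<le> k" "n = k - Suc lo" using Suc lo by auto
    from Suc(1)[OF l2(2) t l2(1) A(1)] obtain Y1 t1 c1 where
      Y1: "reach (Suc lo) k Y Y1" "t1 \<in> PP" "c1 \<in> D Y (Suc lo) k" "s = Y1 (Suc lo) [^] t1 \<otimes> c1" by blast
    have r1: "reach lo k Y Y1" using reach_mono[OF Y1(1)] by simp
    have t1: "tup k Y1" using reach_tup[OF Y1(1) t] .
    have y1lo: "Y1 lo = Y lo" using reach_fix[OF Y1(1) t] by simp
    have c1: "c1 \<in> D Y lo k" "c1 \<in> carrier G" using Y1(3) D_mono[of lo "Suc lo" k Y] t D_carrier by auto
    have y: "Y1 (Suc lo) \<in> carrier G" using t1 False lo by (simp add: tup_def)
    have "v = Y1 lo [^] a \<otimes> Y1 (Suc lo) [^] t1 \<otimes> (c1 \<otimes> c)"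
      using A(3) Y1(4) y1lo x y c1 cc by (simp add: m_assoc)
    moreover from two[OF t1, of lo lo "Suc lo" a t1] obtain Y2 g d where
      Y2: "reach lo k Y1 Y2" "d \<in> D Y1 lo k" "Y1 lo [^] a \<otimes> Y1 (Suc lo) [^] t1 = Y2 lo [^] (g::nat) \<otimes> d"
      using lo False by auto
    moreover have "d \<in> D Y lo k" using Y2(2) reach_D[OF r1 t, of lo] by simp
    moreover have "Y2 lo \<in> carrier G" using reach_tup[OF Y2(1) t1] lo by (simp add: tup_def)
    ultimately have "v = Y2 lo [^] g \<otimes> (d \<otimes> (c1 \<otimes> c))" using D_carrier[OF t] c1 cc by (simp add: m_assoc)
    moreover have "d \<otimes> (c1 \<otimes> c) \<in> D Y lo k"
      using \<open>d \<in> D Y lo k\<close> c1 A(2) subgroup.m_closed[OF sgD] by blast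
    moreover have "reach lo k Y Y2" using r1 Y2(1) by simp
    ultimately show ?thesis using that by blast
  qed
  have t2: "tup k Y2" using reach_tup[OF Y2(1) t] .
  from single[OF t2, of lo lo g] lo obtain Y3 t3 where
    Y3: "reach lo k Y2 Y3" "t3 \<in> PP" "Y2 lo [^] g = Y3 lo [^] t3" by auto
  show ?case using Y2 Y3 by (intro exI[of _ Y3] exI[of _ t3] exI[of _ d]) auto
qed

definition PR :: "(nat \<Rightarrow> 'a) \<Rightarrow> (nat \<Rightarrow> nat) \<Rightarrow> nat \<Rightarrow> nat \<Rightarrow> 'a" where
  "PR Y t a k = foldr (\<lambda>i acc. cm (Y (i - 1)) (Y i) [^] t i \<otimes> acc) [a..<k] \<one>"

lemma PR_end: "k \<le> a \<Longrightarrow> PR Y t a k = \<one>" by (simp add: PR_def)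
lemma PR_step: "a < k \<Longrightarrow> PR Y t a k = cm (Y (a - 1)) (Y a) [^] t a \<otimes> PR Y t (Suc a) k"
  by (simp add: PR_def upt_rec)
lemma PR_cong: "(\<And>i. a \<le> i \<Longrightarrow> i < k \<Longrightarrow> t i = t' i) \<Longrightarrow> PR Y t a k = PR Y t' a k"
  unfolding PR_def by (intro arg_cong[where f="\<lambda>f. foldr f _ _"] ext foldr_cong) auto

end

context grp2e begin

lemma LL: "tup k Y \<Longrightarrow> lo < k \<Longrightarrow> v \<in> S Y (Suc lo) k \<Longrightarrow> z \<in> D Y (Suc lo) k \<Longrightarrow>
  \<exists>Y' t. reach (Suc lo) k Y Y' \<and> (\<forall>i. Suc lo \<le> i \<and> i < k \<longrightarrow> t i \<in> PP) \<and>
     cm (Y lo) v \<otimes> z = PR Y' t (Suc lo) k"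
proof (induction "k - Suc lo" arbitrary: lo Y v z)
  case 0
  note t = 0(2)
  then have "Suc lo = k" using 0 by simp
  then have "v = \<one>" "z = \<one>" using 0 S_empty D_empty by auto
  moreover have "Y lo \<in> carrier G" using t 0 by (simp add: tup_def)
  ultimately show ?case using \<open>Suc lo = k\<close> PR_end by (intro exI[of _ Y] exI[of _ "\<lambda>_. 0"]) auto
next
  case (Suc n)
  note t = Suc(3)
  have l2: "Suc lo < k" "n = k - Suc (Suc lo)" using Suc by auto
  have x: "Y lo \<in> carrier G" using t Suc by (simp add: tup_def)
  from LA[OF t _ Suc(5)] l2 obtain Y1 t1 c where
    Y1: "reach (Suc lo) k Y Y1" "t1 \<in> PP" "c \<in> D Y (Suc lo) k" "v = Y1 (Suc lo) [^] t1 \<otimes> c" by auto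
  have t1: "tup k Y1" using reach_tup[OF Y1(1) t] .
  have y1lo: "Y1 lo = Y lo" using reach_fix[OF Y1(1) t] by simp
  have y: "Y1 (Suc lo) \<in> carrier G" using t1 l2 by (simp add: tup_def)
  have cz: "c \<in> Zc" using Y1(3) D_Zc t by auto
  have "cm (Y lo) v = cm (Y lo) (Y1 (Suc lo)) [^] t1"
    unfolding Y1(4) using x y cz by (simp add: cm_mult_Zc_right cm_pow_right)
  have zD: "z \<in> D Y1 (Suc lo) k" using Suc(6) reach_D[OF Y1(1) t, of "Suc lo"] by simp
  from Rform[OF t1 l2(1) zD] obtain v' z' where
    R: "v' \<in> S Y1 (Suc (Suc lo)) k" "z' \<in> D Y1 (Suc (Suc lo)) k" "z = cm (Y1 (Suc lo)) v' \<otimes> z'" by blast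
  from Suc(1)[OF l2(2) t1 l2(1) R(1,2)] obtain Y2 t2 where
    Y2: "reach (Suc (Suc lo)) k Y1 Y2" "\<forall>i. Suc (Suc lo) \<le> i \<and> i < k \<longrightarrow> t2 i \<in> PP"
        "cm (Y1 (Suc lo)) v' \<otimes> z' = PR Y2 t2 (Suc (Suc lo)) k" by blast
  have y2: "Y2 lo = Y lo" "Y2 (Suc lo) = Y1 (Suc lo)" using reach_fix[OF Y2(1) t1] y1lo by auto
  define tt where "tt = t2(Suc lo := t1)"
  have "PR Y2 tt (Suc lo) k = cm (Y lo) (Y1 (Suc lo)) [^] t1 \<otimes> PR Y2 tt (Suc (Suc lo)) k"
    using PR_step[OF l2(1), of Y2 tt] y2 by (simp add: tt_def)
  also have "PR Y2 tt (Suc (Suc lo)) k = PR Y2 t2 (Suc (Suc lo)) k"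
    by (rule PR_cong) (simp add: tt_def)
  finally have "cm (Y lo) v \<otimes> z = PR Y2 tt (Suc lo) k"
    using \<open>cm (Y lo) v = _\<close> R(3) Y2(3) by simp
  moreover have "reach (Suc lo) k Y Y2" using Y1(1) reach_mono[OF Y2(1)] by (meson le_SucI order_refl rtranclp_trans)
  moreover have "\<forall>i. Suc lo \<le> i \<and> i < k \<longrightarrow> tt i \<in> PP"
    using Y2(2) Y1(2) by (auto simp: tt_def Suc_le_eq)
  ultimately show ?case by blast
qed

lemma main_abs: assumes t: "tup k Y" and k: "0 < k" and w: "w \<in> S Y 0 k"
  shows "\<exists>Y' t. reach 0 k Y Y' \<and> (\<forall>i<k. t i \<in> PP) \<and> w = Y' 0 [^] t 0 \<otimes> PR Y' t 1 k"
proof -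
  from LA[OF t _ w] obtain Y1 t0 c where
    Y1: "reach 0 k Y Y1" "t0 \<in> PP" "c \<in> D Y 0 k" "w = Y1 0 [^] t0 \<otimes> c" by auto
  have t1: "tup k Y1" using reach_tup[OF Y1(1) t] .
  have cD: "c \<in> D Y1 0 k" using Y1(3) reach_D[OF Y1(1) t, of 0] by simp
  from Rform[OF t1 k cD] obtain v z where
    R: "v \<in> S Y1 1 k" "z \<in> D Y1 1 k" "c = cm (Y1 0) v \<otimes> z" by auto
  from LL[OF t1 k] R obtain Y2 t2 where
    Y2: "reach 1 k Y1 Y2" "\<forall>i. 1 \<le> i \<and> i < k \<longrightarrow> t2 i \<in> PP" "cm (Y1 0) v \<otimes> z = PR Y2 t2 1 k"
    by fastforce
  have y2: "Y2 0 = Y1 0" using reach_fix[OF Y2(1) t1] by simp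
  define tt where "tt = t2(0 := t0)"
  have "PR Y2 tt 1 k = PR Y2 t2 1 k" by (rule PR_cong) (simp add: tt_def)
  then have "w = Y2 0 [^] tt 0 \<otimes> PR Y2 tt 1 k" using Y1(4) R(3) Y2(3) y2 by (simp add: tt_def)
  moreover have "reach 0 k Y Y2" using Y1(1) reach_mono[OF Y2(1)] by (meson le0 rtranclp_trans)
  moreover have "\<forall>i<k. tt i \<in> PP" using Y2(2) Y1(2) by (auto simp: tt_def)
  ultimately show ?thesis by blast
qed

end

lemma words_Cons[simp]: "((i, b) # w \<in> words k) \<longleftrightarrow> i < k \<and> w \<in> words k"
  by (auto simp: words_def)
lemma words_Nil[simp]: "[] \<in> words k" by (simp add: words_def)
lemma words_append[simp]: "(u @ v \<in> words k) \<longleftrightarrow> u \<in> words k \<and> v \<in> words k"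
  by (auto simp: words_def)
lemma words_inv[simp]: "u \<in> words k \<Longrightarrow> word_inv u \<in> words k"
  by (auto simp: words_def word_inv_def)
lemma words_concat: "(\<And>x. x \<in> set l \<Longrightarrow> x \<in> words k) \<Longrightarrow> concat l \<in> words k"
  by (induct l) auto
lemma words_pow[simp]: "u \<in> words k \<Longrightarrow> word_pow u n \<in> words k"
  unfolding word_pow_def by (rule words_concat) auto
lemma words_gen[simp]: "i < k \<Longrightarrow> gen i \<in> words k" by (simp add: gen_def)
lemma words_comm[simp]: "u \<in> words k \<Longrightarrow> v \<in> words k \<Longrightarrow> word_comm u v \<in> words k"
  by (simp add: word_comm_def)

lemma eval_Nil[simp]: "eval_word G g [] = \<one>\<^bsub>G\<^esub>" by (simp add: eval_word_def)
lemma eval_Cons[simp]: "eval_word G g ((i, b) # w) =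
   (if b then inv\<^bsub>G\<^esub> (g i) else g i) \<otimes>\<^bsub>G\<^esub> eval_word G g w"
  by (simp add: eval_word_def)

locale wm = group G for G (structure) + fixes k :: nat
begin

abbreviation T where "T \<equiv> tuples G k"

lemma T_carrier: "g \<in> T \<Longrightarrow> i < k \<Longrightarrow> g i \<in> carrier G"
  by (auto simp: tuples_def)

lemma eval_closed[simp]: "u \<in> words k \<Longrightarrow> g \<in> T \<Longrightarrow> eval_word G g u \<in> carrier G"
  by (induct u) (auto simp: T_carrier)

lemma eval_append: "u \<in> words k \<Longrightarrow> v \<in> words k \<Longrightarrow> g \<in> T \<Longrightarrow>
   eval_word G g (u @ v) = eval_word G g u \<otimes> eval_word G g v"
  by (induct u) (auto simp: T_carrier m_assoc)

lemma eval_inv: "u \<in> words k \<Longrightarrow> g \<in> T \<Longrightarrow> eval_word G g (word_inv u) = inv (eval_word G g u)"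
proof (induct u)
  case Nil then show ?case by (simp add: word_inv_def)
next
  case (Cons a u)
  obtain i b where a: "a = (i, b)" by force
  have "word_inv (a # u) = word_inv u @ [(i, \<not> b)]" by (simp add: word_inv_def a)
  then show ?case using Cons a T_carrier[OF Cons(3), of i]
    by (auto simp: eval_append inv_mult_group)
qed

lemma eval_concat: "(\<And>x. x \<in> set l \<Longrightarrow> x \<in> words k) \<Longrightarrow> g \<in> T \<Longrightarrow>
   eval_word G g (concat l) = foldr (\<lambda>x acc. eval_word G g x \<otimes> acc) l \<one>"
  by (induct l) (auto simp: eval_append words_concat)

lemma eval_pow: "u \<in> words k \<Longrightarrow> g \<in> T \<Longrightarrow> eval_word G g (word_pow u n) = eval_word G g u [^] n"
proof (induct n)
  case 0 then show ?case by (simp add: word_pow_def)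
next
  case (Suc n)
  have "word_pow u (Suc n) = u @ word_pow u n" by (simp add: word_pow_def)
  moreover have "eval_word G g u \<otimes> eval_word G g u [^] n = eval_word G g u [^] Suc n"
    using Suc nat_pow_Suc2[of "eval_word G g u" n] by simp
  ultimately show ?case using Suc by (simp add: eval_append del: nat_pow_Suc)
qed

lemma eval_comm: "u \<in> words k \<Longrightarrow> v \<in> words k \<Longrightarrow> g \<in> T \<Longrightarrow>
   eval_word G g (word_comm u v) = gcomm G (eval_word G g u) (eval_word G g v)"
  by (simp add: word_comm_def gcomm_def eval_append eval_inv m_assoc)

lemma eval_gen: "g \<in> T \<Longrightarrow> i < k \<Longrightarrow> eval_word G g (gen i) = g i"
  by (simp add: gen_def T_carrier)

abbreviation W where "W \<equiv> word_map_group G k"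

lemma W_carrier: "carrier W = word_map G k ` words k" by (simp add: word_map_group_def)

lemma wm_apply: "g \<in> T \<Longrightarrow> word_map G k u g = eval_word G g u" by (simp add: word_map_def)

lemma wm_ext: "(\<And>g. g \<in> T \<Longrightarrow> eval_word G g u = eval_word G g v) \<Longrightarrow> word_map G k u = word_map G k v"
  unfolding word_map_def by (rule restrict_ext)

lemma W_mult_def: "f \<otimes>\<^bsub>W\<^esub> h = (\<lambda>g\<in>T. f g \<otimes> h g)" by (simp add: word_map_group_def)
lemma W_one_def: "\<one>\<^bsub>W\<^esub> = (\<lambda>g\<in>T. \<one>)" by (simp add: word_map_group_def)

lemma W_mult: "u \<in> words k \<Longrightarrow> v \<in> words k \<Longrightarrow>
   word_map G k u \<otimes>\<^bsub>W\<^esub> word_map G k v = word_map G k (u @ v)"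
  unfolding W_mult_def by (rule ext) (simp add: word_map_def eval_append)

lemma W_one: "\<one>\<^bsub>W\<^esub> = word_map G k []"
  unfolding W_one_def by (rule ext) (simp add: word_map_def)

lemma W_group: "group W"
proof (rule groupI)
  fix x y assume "x \<in> carrier W" "y \<in> carrier W"
  then show "x \<otimes>\<^bsub>W\<^esub> y \<in> carrier W" by (auto simp: W_carrier W_mult)
next
  show "\<one>\<^bsub>W\<^esub> \<in> carrier W" by (auto simp: W_carrier W_one)
next
  fix x y z assume "x \<in> carrier W" "y \<in> carrier W" "z \<in> carrier W"
  then show "x \<otimes>\<^bsub>W\<^esub> y \<otimes>\<^bsub>W\<^esub> z = x \<otimes>\<^bsub>W\<^esub> (y \<otimes>\<^bsub>W\<^esub> z)" by (auto simp: W_carrier W_mult)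
next
  fix x assume "x \<in> carrier W"
  then show "\<one>\<^bsub>W\<^esub> \<otimes>\<^bsub>W\<^esub> x = x" by (auto simp: W_carrier W_mult W_one)
next
  fix x assume "x \<in> carrier W"
  then obtain u where u: "u \<in> words k" "x = word_map G k u" by (auto simp: W_carrier)
  have "word_map G k (word_inv u) \<otimes>\<^bsub>W\<^esub> x = \<one>\<^bsub>W\<^esub>"
    using u by (simp add: W_mult W_one, intro wm_ext) (simp add: eval_append eval_inv)
  moreover have "word_map G k (word_inv u) \<in> carrier W" using u by (simp add: W_carrier)
  ultimately show "\<exists>y\<in>carrier W. y \<otimes>\<^bsub>W\<^esub> x = \<one>\<^bsub>W\<^esub>" by blast
qed

lemma W_ext_fun: "f \<in> carrier W \<Longrightarrow> f \<in> extensional T"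
  by (auto simp: W_carrier word_map_def)

lemma W_ext: "f \<in> carrier W \<Longrightarrow> h \<in> carrier W \<Longrightarrow> (\<And>g. g \<in> T \<Longrightarrow> f g = h g) \<Longrightarrow> f = h"
  using W_ext_fun extensionalityI by metis

lemma W_pt_carrier: "f \<in> carrier W \<Longrightarrow> g \<in> T \<Longrightarrow> f g \<in> carrier G"
  by (auto simp: W_carrier wm_apply)

lemma W_pt_mult: "g \<in> T \<Longrightarrow> (f \<otimes>\<^bsub>W\<^esub> h) g = f g \<otimes> h g"
  by (simp add: W_mult_def)

lemma W_pt_one: "g \<in> T \<Longrightarrow> \<one>\<^bsub>W\<^esub> g = \<one>"
  by (simp add: W_one_def)

lemma W_pt_inv: assumes f: "f \<in> carrier W" and g: "g \<in> T" shows "(inv\<^bsub>W\<^esub> f) g = inv (f g)"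
proof -
  interpret Wg: group W by (rule W_group)
  have "(inv\<^bsub>W\<^esub> f \<otimes>\<^bsub>W\<^esub> f) g = \<one>" using f g by (simp add: W_pt_one)
  then have "(inv\<^bsub>W\<^esub> f) g \<otimes> f g = \<one>" using g by (simp add: W_pt_mult)
  then show ?thesis using f g W_pt_carrier Wg.inv_closed by (metis inv_equality)
qed

lemma W_pt_pow: assumes f: "f \<in> carrier W" and g: "g \<in> T" shows "(f [^]\<^bsub>W\<^esub> (n::nat)) g = (f g) [^] n"
proof (induct n)
  case 0 then show ?case using g by (simp add: W_pt_one)
next
  case (Suc n) then show ?case using g by (simp add: W_pt_mult)
qed

lemma W_pt_comm: assumes f: "f \<in> carrier W" "h \<in> carrier W" and g: "g \<in> T"
  shows "gcomm W f h g = gcomm G (f g) (h g)"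
proof -
  interpret Wg: group W by (rule W_group)
  show ?thesis using assms by (simp add: gcomm_def W_pt_mult W_pt_inv)
qed

end

lemma (in group_hom) hom_gcomm: "x \<in> carrier G \<Longrightarrow> y \<in> carrier G \<Longrightarrow> h (gcomm G x y) = gcomm H (h x) (h y)"
  by (simp add: gcomm_def hom_inv)

context wm begin

lemma W_inv: assumes u: "u \<in> words k" shows "inv\<^bsub>W\<^esub> (word_map G k u) = word_map G k (word_inv u)"
proof -
  interpret Wg: group W by (rule W_group)
  have "word_map G k (word_inv u) \<otimes>\<^bsub>W\<^esub> word_map G k u = \<one>\<^bsub>W\<^esub>"
    using u by (simp add: W_mult W_one, intro wm_ext) (simp add: eval_append eval_inv)
  then show ?thesis using u by (intro Wg.inv_equality) (auto simp: W_carrier)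
qed

abbreviation XX where "XX \<equiv> (\<lambda>i. word_map G k (gen i))"

lemma wm_in_gen: "u \<in> words k \<Longrightarrow> word_map G k u \<in> generate W (XX ` {0..<k})"
proof (induct u)
  case Nil then show ?case using generate.one[of W] by (simp add: W_one)
next
  case (Cons a u)
  obtain i b where a: "a = (i, b)" by force
  have i: "i < k" "u \<in> words k" using Cons a by auto
  have "word_map G k (a # u) = word_map G k [(i, b)] \<otimes>\<^bsub>W\<^esub> word_map G k u"
    using W_mult[of "[(i,b)]" u] i a by simp
  moreover have "word_map G k [(i, b)] \<in> generate W (XX ` {0..<k})"
  proof (cases b)
    case True
    have "word_map G k [(i, b)] = inv\<^bsub>W\<^esub> (XX i)" using True i W_inv[of "gen i"]
      by (simp add: gen_def word_inv_def)
    then show ?thesis using i by (auto intro: generate.inv)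
  next
    case False
    then show ?thesis using i by (auto intro: generate.incl simp: gen_def)
  qed
  ultimately show ?case using Cons i by (auto intro: generate.eng)
qed

definition tau :: "(nat \<Rightarrow> word) \<Rightarrow> (nat \<Rightarrow> 'a) \<Rightarrow> (nat \<Rightarrow> 'a)" where
  "tau \<sigma> g = (\<lambda>i\<in>{..<k}. eval_word G g (\<sigma> i))"

definition psi :: "(nat \<Rightarrow> word) \<Rightarrow> ((nat \<Rightarrow> 'a) \<Rightarrow> 'a) \<Rightarrow> ((nat \<Rightarrow> 'a) \<Rightarrow> 'a)" where
  "psi \<sigma> f = (\<lambda>g\<in>T. f (tau \<sigma> g))"

definition subst :: "(nat \<Rightarrow> word) \<Rightarrow> word \<Rightarrow> word" where
  "subst \<sigma> u = concat (map (\<lambda>(i, b). if b then word_inv (\<sigma> i) else \<sigma> i) u)"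

lemma tau_T: "\<forall>i<k. \<sigma> i \<in> words k \<Longrightarrow> g \<in> T \<Longrightarrow> tau \<sigma> g \<in> T"
  by (auto simp: tau_def tuples_def)

lemma subst_words: "\<forall>i<k. \<sigma> i \<in> words k \<Longrightarrow> u \<in> words k \<Longrightarrow> subst \<sigma> u \<in> words k"
  by (induct u) (auto simp: subst_def)

lemma eval_subst: assumes s: "\<forall>i<k. \<sigma> i \<in> words k" and g: "g \<in> T"
  shows "u \<in> words k \<Longrightarrow> eval_word G g (subst \<sigma> u) = eval_word G (tau \<sigma> g) u"
proof (induct u)
  case Nil then show ?case by (simp add: subst_def)
next
  case (Cons a u)
  obtain i b where a: "a = (i, b)" by force
  have i: "i < k" "u \<in> words k" using Cons a by auto
  have e: "subst \<sigma> ((i, b) # u) = (if b then word_inv (\<sigma> i) else \<sigma> i) @ subst \<sigma> u"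
    by (simp add: subst_def)
  show ?case unfolding a e using Cons i s g
    by (simp add: eval_append subst_words eval_inv tau_def)
qed

lemma psi_wm: "\<forall>i<k. \<sigma> i \<in> words k \<Longrightarrow> u \<in> words k \<Longrightarrow> psi \<sigma> (word_map G k u) = word_map G k (subst \<sigma> u)"
  unfolding psi_def by (rule ext) (simp add: wm_apply tau_T eval_subst word_map_def)

lemma psi_hom: assumes s: "\<forall>i<k. \<sigma> i \<in> words k" shows "psi \<sigma> \<in> hom W W"
proof (rule homI)
  fix f assume "f \<in> carrier W"
  then show "psi \<sigma> f \<in> carrier W" using s by (auto simp: W_carrier psi_wm subst_words)
next
  fix f h assume "f \<in> carrier W" "h \<in> carrier W"
  show "psi \<sigma> (f \<otimes>\<^bsub>W\<^esub> h) = psi \<sigma> f \<otimes>\<^bsub>W\<^esub> psi \<sigma> h"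
    unfolding psi_def W_mult_def by (rule ext) (simp add: tau_T s)
qed

lemma psi_X: "\<forall>i<k. \<sigma> i \<in> words k \<Longrightarrow> i < k \<Longrightarrow> psi \<sigma> (XX i) = word_map G k (\<sigma> i)"
  unfolding psi_def by (rule ext) (auto simp: word_map_def eval_gen tau_T[unfolded tau_def] tau_def)

end

context wm begin

definition FW :: "(nat \<Rightarrow> (nat \<Rightarrow> 'a) \<Rightarrow> 'a) \<Rightarrow> (nat \<Rightarrow> nat) \<Rightarrow> nat list \<Rightarrow> (nat \<Rightarrow> 'a) \<Rightarrow> 'a" where
  "FW Z t l = foldr (\<lambda>i acc. gcomm W (Z (i - 1)) (Z i) [^]\<^bsub>W\<^esub> t i \<otimes>\<^bsub>W\<^esub> acc) l \<one>\<^bsub>W\<^esub>"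

lemma W_pow_wm: assumes u: "u \<in> words k" shows "word_map G k (word_pow u n) = word_map G k u [^]\<^bsub>W\<^esub> n"
proof (induct n)
  case 0 then show ?case by (simp add: word_pow_def W_one)
next
  case (Suc n)
  interpret Wg: group W by (rule W_group)
  have "word_pow u (Suc n) = u @ word_pow u n" by (simp add: word_pow_def)
  then have "word_map G k (word_pow u (Suc n)) = word_map G k u \<otimes>\<^bsub>W\<^esub> word_map G k (word_pow u n)"
    using u by (simp add: W_mult)
  also have "\<dots> = word_map G k u [^]\<^bsub>W\<^esub> Suc n" using Suc u Wg.nat_pow_Suc2[of "word_map G k u" n]
    by (simp add: W_carrier)
  finally show ?case .
qed

lemma W_comm_wm: "u \<in> words k \<Longrightarrow> v \<in> words k \<Longrightarrow>
  word_map G k (word_comm u v) = gcomm W (word_map G k u) (word_map G k v)"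
  by (simp add: word_comm_def gcomm_def W_mult W_inv)

lemma W_concat_wm: "(\<And>x. x \<in> set l \<Longrightarrow> f x \<in> words k) \<Longrightarrow>
  word_map G k (concat (map f l)) = foldr (\<lambda>x acc. word_map G k (f x) \<otimes>\<^bsub>W\<^esub> acc) l \<one>\<^bsub>W\<^esub>"
proof (induct l)
  case Nil then show ?case by (simp add: W_one)
next
  case (Cons a l)
  have "f a \<in> words k" "concat (map f l) \<in> words k" using Cons(2) by (auto intro!: words_concat)
  then have "word_map G k (f a @ concat (map f l)) = word_map G k (f a) \<otimes>\<^bsub>W\<^esub> word_map G k (concat (map f l))"
    by (simp add: W_mult)
  then show ?case using Cons by simp
qed

lemma nf_wm: assumes k: "k \<ge> 1"
  shows "word_map G k (normal_word k t) = XX 0 [^]\<^bsub>W\<^esub> t 0 \<otimes>\<^bsub>W\<^esub> FW XX t [1..<k]"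
proof -
  have w: "word_pow (word_comm (gen (i - 1)) (gen i)) (t i) \<in> words k" if "i \<in> set [1..<k]" for i
    using that by auto
  have "word_map G k (normal_word k t) = word_map G k (word_pow (gen 0) (t 0)) \<otimes>\<^bsub>W\<^esub>
      word_map G k (concat (map (\<lambda>i. word_pow (word_comm (gen (i - 1)) (gen i)) (t i)) [1..<k]))"
    unfolding normal_word_def using k w by (intro W_mult[symmetric] words_concat) auto
  also have "word_map G k (word_pow (gen 0) (t 0)) = XX 0 [^]\<^bsub>W\<^esub> t 0" using k by (simp add: W_pow_wm)
  also have "word_map G k (concat (map (\<lambda>i. word_pow (word_comm (gen (i - 1)) (gen i)) (t i)) [1..<k])) = FW XX t [1..<k]"
  proof -
    have "word_map G k (concat (map (\<lambda>i. word_pow (word_comm (gen (i - 1)) (gen i)) (t i)) [1..<k])) =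
      foldr (\<lambda>x acc. word_map G k (word_pow (word_comm (gen (x - 1)) (gen x)) (t x)) \<otimes>\<^bsub>W\<^esub> acc) [1..<k] \<one>\<^bsub>W\<^esub>"
      by (rule W_concat_wm) (rule w)
    also have "\<dots> = FW XX t [1..<k]" unfolding FW_def
      by (rule foldr_cong) (auto simp: W_pow_wm W_comm_wm)
    finally show ?thesis .
  qed
  finally show ?thesis .
qed

lemma FW_hom: assumes h: "group_hom W W \<psi>" and Z: "\<And>i. i < k \<Longrightarrow> Z i \<in> carrier W"
  and Y: "\<And>i. i < k \<Longrightarrow> \<psi> (Z i) = Y i" and l: "\<And>i. i \<in> set l \<Longrightarrow> i < k"
  shows "FW Z t l \<in> carrier W \<and> \<psi> (FW Z t l) = FW Y t l"
  using l
proof (induct l)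
  case Nil
  then show ?case using group_hom.hom_one[OF h] by (simp add: FW_def group.is_monoid[OF W_group])
next
  case (Cons i l)
  interpret Wg: group W by (rule W_group)
  have i: "i < k" "i - 1 < k" using Cons(2)[of i] by auto
  have c: "gcomm W (Z (i - 1)) (Z i) [^]\<^bsub>W\<^esub> t i \<in> carrier W" using Z i by (simp add: gcomm_def)
  have "FW Z t (i # l) = gcomm W (Z (i - 1)) (Z i) [^]\<^bsub>W\<^esub> t i \<otimes>\<^bsub>W\<^esub> FW Z t l" by (simp add: FW_def)
  moreover have "FW Y t (i # l) = gcomm W (Y (i - 1)) (Y i) [^]\<^bsub>W\<^esub> t i \<otimes>\<^bsub>W\<^esub> FW Y t l" by (simp add: FW_def)
  moreover have "\<psi> (gcomm W (Z (i - 1)) (Z i) [^]\<^bsub>W\<^esub> t i) = gcomm W (Y (i - 1)) (Y i) [^]\<^bsub>W\<^esub> t i"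
  proof -
    have zc: "Z (i - 1) \<in> carrier W" "Z i \<in> carrier W" using Z i by auto
    have gc: "gcomm W (Z (i - 1)) (Z i) \<in> carrier W" using zc by (simp add: gcomm_def)
    show ?thesis using group_hom.hom_nat_pow[OF h gc] group_hom.hom_gcomm[OF h zc] Y i by simp
  qed
  ultimately show ?case using Cons c
    by (simp add: group_hom.hom_mult[OF h])
qed

lemma W_grp2e: assumes cen: "\<And>x y z. x \<in> carrier G \<Longrightarrow> y \<in> carrier G \<Longrightarrow> z \<in> carrier G \<Longrightarrow>
     gcomm G x y \<otimes> z = z \<otimes> gcomm G x y"
  and pr: "Factorial_Ring.prime p" and card: "card (carrier G) = p ^ n"
  shows "grp2e W p n"
proof -
  interpret Wg: group W by (rule W_group)
  have "grp2 W"
  proof (unfold_locales)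
    fix f h l assume f: "f \<in> carrier W" "h \<in> carrier W" "l \<in> carrier W"
    have cc: "gcomm W f h \<in> carrier W" using f by (simp add: gcomm_def)
    show "gcomm W f h \<otimes>\<^bsub>W\<^esub> l = l \<otimes>\<^bsub>W\<^esub> gcomm W f h"
      by (rule W_ext) (use f cc in \<open>auto simp: W_pt_mult W_pt_comm W_pt_carrier intro!: cen\<close>)
  qed
  moreover have "grp2e_axioms W p n"
  proof
    show "Factorial_Ring.prime p" by (rule pr)
    fix f assume f: "f \<in> carrier W"
    show "f [^]\<^bsub>W\<^esub> p ^ n = \<one>\<^bsub>W\<^esub>"
    proof (rule W_ext)
      fix g assume g: "g \<in> T"
      have "(f g) [^] order G = \<one>" using W_pt_carrier[OF f g] by (rule pow_order_eq_1)
      then show "(f [^]\<^bsub>W\<^esub> p ^ n) g = \<one>\<^bsub>W\<^esub> g" using f g card by (simp add: W_pt_pow W_pt_one order_def)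
    qed (use f in auto)
  qed
  ultimately show ?thesis by (simp add: grp2e_def)
qed

lemma W_finite: assumes "finite (carrier G)" shows "finite (carrier W)"
proof -
  have "finite T" unfolding tuples_def using assms by (intro finite_PiE) auto
  then have "finite (PiE T (\<lambda>_. carrier G))" using assms by (intro finite_PiE) auto
  moreover have "carrier W \<subseteq> PiE T (\<lambda>_. carrier G)"
    by (auto simp: W_carrier word_map_def)
  ultimately show ?thesis by (rule finite_subset[rotated])
qed

end

theorem theorem2p7:
  fixes G :: "('a, 'b) monoid_scheme" and p k :: nat and w :: word
  assumes "Factorial_Ring.prime p"
    and "finite_p_group G p"
    and "nilpotent_class_2 G"
    and "k \<ge> 1"
    and "w \<in> words k"
  shows "\<exists>t :: nat \<Rightarrow> nat. (\<forall>i < k. t i \<in> power_set_P p) \<and>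
           automorphic G k w (normal_word k t)"
proof -
  note pr = assms(1) and kk = assms(4) and ww = assms(5)
  obtain n where grp: "group G" and fin: "finite (carrier G)" and card: "card (carrier G) = p ^ n"
    using assms(2) by (auto simp: finite_p_group_def)
  interpret wm G k by (rule wm.intro[OF grp])
  have cen: "gcomm G x y \<otimes>\<^bsub>G\<^esub> z = z \<otimes>\<^bsub>G\<^esub> gcomm G x y"
    if "x \<in> carrier G" "y \<in> carrier G" "z \<in> carrier G" for x y z
  proof -
    have "gcomm G x y \<in> derived G (carrier G)"
      unfolding derived_def gcomm_def using that by (intro generate.incl) blast
    then have "gcomm G x y \<in> center_of G" using assms(3) by (auto simp: nilpotent_class_2_def)
    then show ?thesis using that by (auto simp: center_of_def)
  qed
  interpret Wl: grp2e W p n by (rule W_grp2e[OF cen pr card])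
  interpret Wg: group W by (rule W_group)
  have tX: "Wl.tup k XX" by (auto simp: Wl.tup_def W_carrier)
  have allgen: "carrier W \<subseteq> Wl.S XX 0 k" by (auto simp: W_carrier Wl.S_def wm_in_gen)
  have wS: "word_map G k w \<in> Wl.S XX 0 k" using ww allgen by (auto simp: W_carrier)
  from Wl.main_abs[OF tX _ wS] kk obtain Y t where
    Y: "Wl.reach 0 k XX Y" "\<forall>i<k. t i \<in> power_set_P p" "word_map G k w = Y 0 [^]\<^bsub>W\<^esub> t 0 \<otimes>\<^bsub>W\<^esub> Wl.PR Y t 1 k"
    by auto
  have tY: "Wl.tup k Y" using Wl.reach_tup[OF Y(1) tX] .
  have SY: "Wl.S Y 0 k = Wl.S XX 0 k" using Wl.reach_S[OF Y(1) tX, of 0] by simp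
  have "\<forall>i<k. \<exists>u. u \<in> words k \<and> Y i = word_map G k u" using tY by (auto simp: Wl.tup_def W_carrier)
  then obtain \<sigma> where \<sigma>: "\<forall>i<k. \<sigma> i \<in> words k \<and> Y i = word_map G k (\<sigma> i)" by metis
  have sw: "\<forall>i<k. \<sigma> i \<in> words k" using \<sigma> by auto
  define \<psi> where "\<psi> = psi \<sigma>"
  have hom: "\<psi> \<in> hom W W" unfolding \<psi>_def using psi_hom[OF sw] .
  have gh: "group_hom W W \<psi>" using hom by (intro group_hom.intro group_hom_axioms.intro) (simp_all add: W_group)
  have psiX: "\<psi> (XX i) = Y i" if "i < k" for i using psi_X[OF sw that] \<sigma> that by (simp add: \<psi>_def)
  have img_sub: "\<psi> ` carrier W \<subseteq> carrier W" using hom by (auto simp: hom_def)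
  have "Wl.S Y 0 k \<subseteq> \<psi> ` carrier W"
    unfolding Wl.S_def
  proof (rule Wl.generate_subgroup_incl)
    show "Y ` {0..<k} \<subseteq> \<psi> ` carrier W"
    proof
      fix y assume "y \<in> Y ` {0..<k}"
      then obtain i where i: "i < k" "y = Y i" by auto
      then have "y = \<psi> (XX i)" using psiX by simp
      moreover have "XX i \<in> carrier W" using i by (auto simp: W_carrier)
      ultimately show "y \<in> \<psi> ` carrier W" by blast
    qed
    show "subgroup (\<psi> ` carrier W) W" by (rule group_hom.img_is_subgroup[OF gh])
  qed
  then have surj: "\<psi> ` carrier W = carrier W" using SY allgen img_sub by auto
  have inj: "inj_on \<psi> (carrier W)" by (rule eq_card_imp_inj_on[OF W_finite[OF fin]]) (simp only: surj)
  have iso: "\<psi> \<in> iso W W" using hom inj surj by (simp add: iso_def bij_betw_def)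
  define NF where "NF = word_map G k (normal_word k t)"
  have NF: "NF = XX 0 [^]\<^bsub>W\<^esub> t 0 \<otimes>\<^bsub>W\<^esub> FW XX t [1..<k]" unfolding NF_def by (rule nf_wm[OF kk])
  have XXc: "\<And>i. i < k \<Longrightarrow> XX i \<in> carrier W" by (auto simp: W_carrier)
  have FWh: "FW XX t [1..<k] \<in> carrier W \<and> \<psi> (FW XX t [1..<k]) = FW Y t [1..<k]"
    using FW_hom[where \<psi>=\<psi> and Z=XX and Y=Y and l="[1..<k]" and t=t] gh XXc psiX by simp
  have PRY: "Wl.PR Y t 1 k = FW Y t [1..<k]" by (simp add: Wl.PR_def FW_def)
  have x0: "XX 0 \<in> carrier W" using XXc kk by auto
  have NFc: "NF \<in> carrier W" using NF FWh x0 by simp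
  have "\<psi> NF = \<psi> (XX 0) [^]\<^bsub>W\<^esub> t 0 \<otimes>\<^bsub>W\<^esub> \<psi> (FW XX t [1..<k])"
    using NF FWh x0 by (simp add: group_hom.hom_mult[OF gh] group_hom.hom_nat_pow[OF gh])
  also have "\<dots> = word_map G k w" using Y(3) PRY FWh psiX kk by simp
  finally have psiNF: "\<psi> NF = word_map G k w" .
  define \<phi> where "\<phi> = inv_into (carrier W) \<psi>"
  have "\<phi> \<in> iso W W" unfolding \<phi>_def by (rule Wl.iso_set_sym[OF iso])
  moreover have "\<phi> (word_map G k w) = word_map G k (normal_word k t)"
    unfolding \<phi>_def psiNF[symmetric] using inv_into_f_f[OF inj NFc] NF_def by simp
  ultimately have "automorphic G k w (normal_word k t)" unfolding automorphic_def by blast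
  then show ?thesis using Y(2) by blast
qed

end
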